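(* For every connected access structure $\mathcal{A}\subseteq 2^P$, $\kappa(\mathcal{A})=\kappa(\mathcal{A}^\perp)$, where $\kappa(\mathcal{A})=\inf\{\sigma(\mathcal M):\mathcal M\text{ is a polymatroid realizing }\mathcal{A}\}$.
   Context: A polymatroid $(f,M)$ consists of a finite set $M$ and a function $f$ on subsets of $M$ with $f(\emptyset)=0$ that is non-negative, monotone and submodular. An access structure on a finite set $P$ is a non-empty upward-closed $\mathcal{A}\subseteq 2^P$ with $\emptyset\notin\mathcal{A}$; its dual is $\mathcal{A}^\perp=\{A\subseteq P: P\setminus A\notin\mathcal{A}\}$. A participant $i$ is important if some $A\notin\mathcal{A}$ has $A\cup\{i\}\in\mathcal{A}$; $\mathcal{A}$ is connected if every participant is important. Let $s\notin P$; juxtaposition denotes union. A polymatroid $(f,sP)$ realizes $\mathcal{A}$ if for every $A\subseteq P$: $A\in\mathcal{A}$ iff $f(sA)=f(A)$, and $A\notin\mathcal{A}$ iff $f(sA)=f(A)+f(s)$. The complexity of a realizing polymatroid is $\sigma(\mathcal M)=\max_{i\in P}f(i)/f(s)$. *)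

theory Defs
  imports Main "HOL-Library.Extended_Real"
begin

text \<open>Participants have type 'a; the dealer s is modelled as None and participant i as Some i,
  so the ground set sP is  insert None (Some ` P).\<close>

definition access_structure :: "'a set \<Rightarrow> 'a set set \<Rightarrow> bool" where
  "access_structure P \<A> \<longleftrightarrow> finite P \<and> \<A> \<subseteq> Pow P \<and> \<A> \<noteq> {} \<and> {} \<notin> \<A> \<and>
     (\<forall>A\<in>\<A>. \<forall>B. A \<subseteq> B \<and> B \<subseteq> P \<longrightarrow> B \<in> \<A>)"

definition dual_as :: "'a set \<Rightarrow> 'a set set \<Rightarrow> 'a set set" where
  "dual_as P \<A> = {A. A \<subseteq> P \<and> P - A \<notin> \<A>}"

definition important :: "'a set \<Rightarrow> 'a set set \<Rightarrow> 'a \<Rightarrow> bool" where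
  "important P \<A> i \<longleftrightarrow> (\<exists>A. A \<subseteq> P \<and> A \<notin> \<A> \<and> insert i A \<in> \<A>)"

definition connected_as :: "'a set \<Rightarrow> 'a set set \<Rightarrow> bool" where
  "connected_as P \<A> \<longleftrightarrow> (\<forall>i\<in>P. important P \<A> i)"

definition polymatroid :: "'b set \<Rightarrow> ('b set \<Rightarrow> real) \<Rightarrow> bool" where
  "polymatroid M f \<longleftrightarrow> finite M \<and> f {} = 0 \<and>
     (\<forall>X. X \<subseteq> M \<longrightarrow> 0 \<le> f X) \<and>
     (\<forall>X Y. X \<subseteq> Y \<and> Y \<subseteq> M \<longrightarrow> f X \<le> f Y) \<and>
     (\<forall>X Y. X \<subseteq> M \<and> Y \<subseteq> M \<longrightarrow> f (X \<union> Y) + f (X \<inter> Y) \<le> f X + f Y)"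

definition realizes :: "'a set \<Rightarrow> 'a set set \<Rightarrow> ('a option set \<Rightarrow> real) \<Rightarrow> bool" where
  "realizes P \<A> f \<longleftrightarrow> polymatroid (insert None (Some ` P)) f \<and>
     (\<forall>A. A \<subseteq> P \<longrightarrow>
        (A \<in> \<A> \<longleftrightarrow> f (insert None (Some ` A)) = f (Some ` A)) \<and>
        (A \<notin> \<A> \<longleftrightarrow> f (insert None (Some ` A)) = f (Some ` A) + f {None}))"

definition complexity :: "'a set \<Rightarrow> ('a option set \<Rightarrow> real) \<Rightarrow> real" where
  "complexity P f = Max ((\<lambda>i. f {Some i} / f {None}) ` P)"

text \<open>Infimum taken in the extended reals (the infimum of the empty set is \<infinity>).\<close>
definition kappa :: "'a set \<Rightarrow> 'a set set \<Rightarrow> ereal" where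
  "kappa P \<A> = Inf {ereal (complexity P f) | f. realizes P \<A> f}"

end

theory Submission
  imports Defs
begin

lemma Max_img_mono:
  fixes a b :: "'x \<Rightarrow> real"
  assumes "finite P" "\<And>i. i \<in> P \<Longrightarrow> a i \<le> b i"
  shows "Max (a ` P) \<le> Max (b ` P)"
proof (cases "P = {}")
  case True thus ?thesis by simp
next
  case False
  show ?thesis
  proof (subst Max_le_iff)
    show "finite (a ` P)" using assms by simp
    show "a ` P \<noteq> {}" using False by simp
    show "\<forall>x\<in>a ` P. x \<le> Max (b ` P)"
    proof
      fix x assume "x \<in> a ` P"
      then obtain i where i: "i \<in> P" "x = a i" by auto
      have "b i \<le> Max (b ` P)" using assms i by (intro Max_ge) auto
      thus "x \<le> Max (b ` P)" using assms(2)[OF i(1)] i by simp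
    qed
  qed
qed

lemma poly_sum_bound:
  assumes pm: "polymatroid M f" and W: "finite W"
  shows "Z \<union> W \<subseteq> M \<Longrightarrow> f (Z \<union> W) \<le> f Z + (\<Sum>w\<in>W. f {w})"
  using W
proof (induction W)
  case empty thus ?case by simp
next
  case (insert w W)
  have sub: "\<forall>X Y. X \<subseteq> M \<and> Y \<subseteq> M \<longrightarrow> f (X \<union> Y) + f (X \<inter> Y) \<le> f X + f Y"
    and nn: "\<forall>X. X \<subseteq> M \<longrightarrow> 0 \<le> f X" using pm unfolding polymatroid_def by auto
  have IH: "f (Z \<union> W) \<le> f Z + (\<Sum>w\<in>W. f {w})" using insert by auto
  have "f ((Z \<union> W) \<union> {w}) + f ((Z \<union> W) \<inter> {w}) \<le> f (Z \<union> W) + f {w}"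
    using sub insert.prems by (metis Un_subset_iff insert_is_Un insert_subset)
  moreover have "(Z \<union> W) \<inter> {w} \<subseteq> M" using insert.prems by auto
  hence "0 \<le> f ((Z \<union> W) \<inter> {w})" using nn by blast
  moreover have "Z \<union> insert w W = (Z \<union> W) \<union> {w}" by auto
  ultimately show ?case using IH insert.hyps by simp
qed

definition dualf :: "'b set \<Rightarrow> ('b set \<Rightarrow> real) \<Rightarrow> 'b set \<Rightarrow> real" where
  "dualf M f X = (\<Sum>x\<in>X. f {x}) + f (M - X) - f M"

lemma dual_poly:
  assumes pm: "polymatroid M f"
  shows "polymatroid M (dualf M f)"
proof -
  have fin: "finite M" and f0: "f {} = 0"
    and nn: "\<forall>X. X \<subseteq> M \<longrightarrow> 0 \<le> f X"
    and mo: "\<forall>X Y. X \<subseteq> Y \<and> Y \<subseteq> M \<longrightarrow> f X \<le> f Y"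
    and sub: "\<forall>X Y. X \<subseteq> M \<and> Y \<subseteq> M \<longrightarrow> f (X \<union> Y) + f (X \<inter> Y) \<le> f X + f Y"
    using pm unfolding polymatroid_def by auto
  have mono: "dualf M f X \<le> dualf M f Y" if "X \<subseteq> Y" "Y \<subseteq> M" for X Y
  proof -
    have fY: "finite Y" "finite (Y - X)" using fin that finite_subset by blast+
    have "M - X = (M - Y) \<union> (Y - X)" using that by auto
    hence "f (M - X) \<le> f (M - Y) + (\<Sum>w\<in>Y - X. f {w})"
      using poly_sum_bound[OF pm fY(2), of "M - Y"] that by auto
    moreover have "(\<Sum>x\<in>Y. f {x}) = (\<Sum>x\<in>X. f {x}) + (\<Sum>x\<in>Y - X. f {x})"
      using fY that by (metis add.commute sum.subset_diff)
    ultimately show ?thesis unfolding dualf_def by linarith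
  qed
  have d0: "dualf M f {} = 0" unfolding dualf_def by simp
  show ?thesis unfolding polymatroid_def
  proof (intro conjI allI impI)
    show "finite M" by fact
    show "dualf M f {} = 0" by fact
    fix X assume "X \<subseteq> M" thus "0 \<le> dualf M f X" using mono[of "{}" X] d0 by simp
  next
    fix X Y assume "X \<subseteq> Y \<and> Y \<subseteq> M" thus "dualf M f X \<le> dualf M f Y" using mono by blast
  next
    fix X Y assume XY: "X \<subseteq> M \<and> Y \<subseteq> M"
    have fXY: "finite X" "finite Y" using fin XY finite_subset by blast+
    have s: "(\<Sum>x\<in>X \<union> Y. f {x}) + (\<Sum>x\<in>X \<inter> Y. f {x}) = (\<Sum>x\<in>X. f {x}) + (\<Sum>x\<in>Y. f {x})"
      using sum.union_inter[OF fXY] by simp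
    have "f ((M - X) \<union> (M - Y)) + f ((M - X) \<inter> (M - Y)) \<le> f (M - X) + f (M - Y)"
      using sub by auto
    moreover have "(M - X) \<union> (M - Y) = M - (X \<inter> Y)" "(M - X) \<inter> (M - Y) = M - (X \<union> Y)" by auto
    ultimately show "dualf M f (X \<union> Y) + dualf M f (X \<inter> Y) \<le> dualf M f X + dualf M f Y"
      using s unfolding dualf_def by simp
  qed
qed

lemma realizes_None_nz:
  assumes "realizes P B f" shows "f {None} \<noteq> 0"
proof
  assume z: "f {None} = 0"
  have "({} \<in> B \<longleftrightarrow> f (insert None (Some ` {})) = f (Some ` {})) \<and>
        ({} \<notin> B \<longleftrightarrow> f (insert None (Some ` {})) = f (Some ` {}) + f {None})"
    using assms unfolding realizes_def by blast
  moreover have "f {} = 0" using assms unfolding realizes_def polymatroid_def by blast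
  ultimately show False using z by simp
qed

lemma dual_realizes:
  assumes r: "realizes P B f" and PB: "P \<in> B"
  defines "M \<equiv> insert None (Some ` P)"
  shows "realizes P (dual_as P B) (dualf M f)"
    and "complexity P (dualf M f) \<le> complexity P f"
proof -
  have pm: "polymatroid M f" using r unfolding realizes_def M_def by blast
  have fin: "finite M" and nn: "\<forall>X. X \<subseteq> M \<longrightarrow> 0 \<le> f X"
    and mo: "\<forall>X Y. X \<subseteq> Y \<and> Y \<subseteq> M \<longrightarrow> f X \<le> f Y"
    using pm unfolding polymatroid_def by auto
  have finP: "finite P" using fin unfolding M_def by (simp add: finite_image_iff)
  have rB: "\<And>A. A \<subseteq> P \<Longrightarrow> (A \<in> B \<longleftrightarrow> f (insert None (Some ` A)) = f (Some ` A)) \<and>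
        (A \<notin> B \<longleftrightarrow> f (insert None (Some ` A)) = f (Some ` A) + f {None})"
    using r unfolding realizes_def by blast
  have nz: "f {None} \<noteq> 0" by (rule realizes_None_nz[OF r])
  have pos: "f {None} > 0" using nz nn unfolding M_def by force
  have fM: "f M = f (Some ` P)" using rB[of P] PB unfolding M_def by simp
  have dN: "dualf M f {None} = f {None}"
    unfolding dualf_def using fM by (simp add: M_def)
  show "realizes P (dual_as P B) (dualf M f)"
    unfolding realizes_def
  proof (intro conjI allI impI)
    show "polymatroid (insert None (Some ` P)) (dualf M f)"
      using dual_poly[OF pm] by (simp add: M_def)
  next
    fix A assume AP: "A \<subseteq> P"
    let ?C = "P - A"
    have finA: "finite A" using AP finP finite_subset by blast
    have e1: "M - insert None (Some ` A) = Some ` ?C" unfolding M_def by auto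
    have e2: "M - Some ` A = insert None (Some ` ?C)" unfolding M_def by auto
    have ss: "(\<Sum>x\<in>insert None (Some ` A). f {x}) = f {None} + (\<Sum>x\<in>Some ` A. f {x})"
      using finA by (subst sum.insert) auto
    have diff: "dualf M f (insert None (Some ` A)) - dualf M f (Some ` A)
       = f {None} + f (Some ` ?C) - f (insert None (Some ` ?C))"
      unfolding dualf_def e1 e2 ss by simp
    have dm: "A \<in> dual_as P B \<longleftrightarrow> ?C \<notin> B" using AP unfolding dual_as_def by auto
    have CP: "?C \<subseteq> P" by auto
    show "A \<in> dual_as P B \<longleftrightarrow> dualf M f (insert None (Some ` A)) = dualf M f (Some ` A)"
      using rB[OF CP] diff dm nz by (cases "?C \<in> B") auto
    show "A \<notin> dual_as P B \<longleftrightarrow> dualf M f (insert None (Some ` A)) = dualf M f (Some ` A) + dualf M f {None}"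
      using rB[OF CP] diff dm nz dN by (cases "?C \<in> B") auto
  qed
  show "complexity P (dualf M f) \<le> complexity P f"
    unfolding complexity_def dN
  proof (rule Max_img_mono[OF finP])
    fix i assume iP: "i \<in> P"
    have "f (M - {Some i}) \<le> f M"
      using mo by auto
    hence "dualf M f {Some i} \<le> f {Some i}" unfolding dualf_def by simp
    thus "dualf M f {Some i} / f {None} \<le> f {Some i} / f {None}"
      using pos by (simp add: divide_right_mono)
  qed
qed

lemma kappa_dual_le:
  assumes "P \<in> B"
  shows "kappa P (dual_as P B) \<le> kappa P B"
  unfolding kappa_def
proof (rule Inf_mono)
  fix b assume "b \<in> {ereal (complexity P f) |f. realizes P B f}"
  then obtain f where f: "realizes P B f" "b = ereal (complexity P f)" by auto
  let ?g = "dualf (insert None (Some ` P)) f"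
  have "realizes P (dual_as P B) ?g" "complexity P ?g \<le> complexity P f"
    using dual_realizes[OF f(1) assms] by auto
  thus "\<exists>a\<in>{ereal (complexity P f) |f. realizes P (dual_as P B) f}. a \<le> b"
    using f(2) by auto
qed

theorem claim2p13:
  fixes P :: "'a set" and \<A> :: "'a set set"
  assumes "access_structure P \<A>" and "connected_as P \<A>"
  shows "kappa P \<A> = kappa P (dual_as P \<A>)"
proof -
  have as: "\<A> \<subseteq> Pow P" "\<A> \<noteq> {}" "{} \<notin> \<A>" "\<forall>A\<in>\<A>. \<forall>B. A \<subseteq> B \<and> B \<subseteq> P \<longrightarrow> B \<in> \<A>"
    using assms(1) unfolding access_structure_def by auto
  have PA: "P \<in> \<A>" using as by blast
  have PD: "P \<in> dual_as P \<A>" using as(3) unfolding dual_as_def by auto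
  have dd: "dual_as P (dual_as P \<A>) = \<A>"
    using as(1) unfolding dual_as_def by (auto simp: double_diff)
  have "kappa P (dual_as P \<A>) \<le> kappa P \<A>" by (rule kappa_dual_le[OF PA])
  moreover have "kappa P \<A> \<le> kappa P (dual_as P \<A>)"
    using kappa_dual_le[OF PD] dd by simp
  ultimately show ?thesis by simp
qed

end
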